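(* Under the setting and assumptions of the following model: $n\ge p\ge1$, $m\ge1$, a fixed feature map $\bm f:\mathbb{R}^d\to\mathbb{R}^p$; training data $\{(\bm x_i,y_i)\}_{i=1}^n$ and testing data $\{(\bm u_i,v_i)\}_{i=1}^m$ drawn as two independent samples of i.i.d. rows from a common distribution with, conditionally on predictors, independent responses $y\mid\bm x\sim\mathcal N(\bm f(\bm x)'\bm\beta,\sigma^2)$; $\bm F_x$ ($n\times p$, rows $\bm f(\bm x_i)'$) of rank $p$, $\bm F_u$ ($m\times p$, rows $\bm f(\bm u_i)'$); $\hat{\bm\beta}=(\bm F_x'\bm F_x)^{-1}\bm F_x'\bm y$ and $\widehat{\mathcal E}=\frac1m\sum_{i=1}^m\{v_i-\bm f(\bm u_i)'\hat{\bm\beta}\}^2$. If in addition the "matched split" condition $$\frac1n\bm F_x'\bm F_x=\frac1m\bm F_u'\bm F_u$$ holds almost surely, then $$E\{\widehat{\mathcal E}^2\}=\sigma^4\Big\{\Big(1+\frac pn\Big)^2+\frac2m+\frac{4p}{mn}+\frac{2p}{n^2}\Big\}.$$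
   Context: The expectation $E\{\cdot\}$ is over all randomness, including predictors and responses of both training and testing sets. *)

theory Defs
  imports "HOL-Probability.Probability"
begin

definition design :: "('d \<Rightarrow> real^'p) \<Rightarrow> ('k \<Rightarrow> 'd) \<Rightarrow> real^'p^'k::finite" where
  "design f xs = (\<chi> i. f (xs i))"

definition ols :: "real^'p^'n \<Rightarrow> real^'n \<Rightarrow> real^'p" where
  "ols F y = (matrix_inv (transpose F ** F) ** transpose F) *v y"

definition test_error :: "('d \<Rightarrow> real^'p) \<Rightarrow> ('m::finite \<Rightarrow> 'd) \<Rightarrow> ('m \<Rightarrow> real) \<Rightarrow> real^'p \<Rightarrow> real" where
  "test_error f us vs b = (1 / real CARD('m)) * (\<Sum>j\<in>UNIV. (vs j - f (us j) \<bullet> b)\<^sup>2)"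

text \<open>Common row distribution: x ~ Px, y = f(x)'beta + e with e ~ N(0, sigma^2) independent of x,
  i.e. y | x ~ N(f(x)'beta, sigma^2).\<close>
definition row_distr :: "'d::euclidean_space measure \<Rightarrow> ('d \<Rightarrow> real^'p) \<Rightarrow> real^'p \<Rightarrow> real \<Rightarrow> ('d \<times> real) measure" where
  "row_distr Px f \<beta> \<sigma> =
     distr (Px \<Otimes>\<^sub>M density lborel (normal_density 0 \<sigma>)) (borel \<Otimes>\<^sub>M borel)
       (\<lambda>(x, e). (x, f x \<bullet> \<beta> + e))"

end

theory Submission
  imports Defs
begin


context
  fixes \<sigma> :: real
  assumes sp: "0 < \<sigma>"
begin

definition "NN = density lborel (normal_density 0 \<sigma>)"

lemma NN_prob: "prob_space NN"
  unfolding NN_def using prob_space_normal_density[OF sp] by simp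

lemma NN_sets[simp]: "sets NN = sets borel"
  by (simp add: NN_def)

lemma NN_integrable_pow: "integrable NN (\<lambda>t. t ^ k)"
  unfolding NN_def
  by (subst integrable_density) (use integrable_normal_moment[OF sp, of 0 k] in auto)

lemma NN_integral_pow: "(\<integral>t. t ^ k \<partial>NN) = (\<integral>t. normal_density 0 \<sigma> t * (t - 0) ^ k \<partial>lborel)"
  unfolding NN_def by (subst integral_density) auto

definition "mom k = (\<integral>t. t ^ k \<partial>NN)"

lemma mom0: "mom 0 = 1"
  unfolding mom_def NN_integral_pow using integral_normal_density[OF sp] by simp

lemma mom1: "mom 1 = 0"
  unfolding mom_def NN_integral_pow using integral_normal_moment_odd[OF sp, of 0 0] by simp

lemma mom3: "mom 3 = 0"
  unfolding mom_def NN_integral_pow using integral_normal_moment_odd[OF sp, of 0 1] by (simp add: numeral_eq_Suc)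

lemma mom2: "mom 2 = \<sigma>^2"
  unfolding mom_def NN_integral_pow using integral_normal_moment_even[OF sp, of 0 1] sp by (simp add: numeral_eq_Suc)

lemma mom4: "mom 4 = 3 * \<sigma>^4"
proof -
  have "mom 4 = fact (2 * 2) / ((2 / \<sigma>\<^sup>2)^2 * fact 2)"
    unfolding mom_def NN_integral_pow using integral_normal_moment_even[OF sp, of 0 2] by simp
  also have "\<dots> = 3 * \<sigma>^4" using sp by (simp add: fact_numeral field_simps power2_eq_square power4_eq_xxxx)
  finally show ?thesis .
qed


lemma momS: "mom (Suc 0) = 0" "mom (Suc (Suc 0)) = \<sigma>^2" "mom (Suc (Suc (Suc 0))) = 0"
  "mom (Suc (Suc (Suc (Suc 0)))) = 3 * \<sigma>^4"
  using mom1 mom2 mom3 mom4 by (simp_all add: numeral_eq_Suc)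

lemma NN_pow_integrable_prod:
  fixes g :: "'k::finite \<Rightarrow> nat"
  shows "integrable (PiM UNIV (\<lambda>_::'k. NN)) (\<lambda>z. \<Prod>k\<in>UNIV. z k ^ g k)"
proof -
  interpret product_prob_space "\<lambda>_::'k. NN" using NN_prob by (simp add: product_prob_space_def product_prob_space_axioms_def product_sigma_finite_def prob_space_imp_sigma_finite)
  show ?thesis by (rule product_integrable_prod) (auto intro: NN_integrable_pow)
qed

lemma NN_pow_integral_prod:
  fixes g :: "'k::finite \<Rightarrow> nat"
  shows "(\<integral>z. (\<Prod>k\<in>UNIV. z k ^ g k) \<partial>PiM UNIV (\<lambda>_::'k. NN)) = (\<Prod>k\<in>UNIV. mom (g k))"
proof -
  interpret product_prob_space "\<lambda>_::'k. NN" using NN_prob by (simp add: product_prob_space_def product_prob_space_axioms_def product_sigma_finite_def prob_space_imp_sigma_finite)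
  show ?thesis unfolding mom_def by (rule product_integral_prod) (auto intro: NN_integrable_pow)
qed

definition cnt :: "'k \<Rightarrow> 'k \<Rightarrow> 'k \<Rightarrow> 'k \<Rightarrow> 'k \<Rightarrow> nat" where
  "cnt a b c d k = of_bool (a = k) + of_bool (b = k) + of_bool (c = k) + of_bool (d = k)"

lemma prod_single: "(\<Prod>k\<in>(UNIV::'k::finite set). (z k::real) ^ of_bool (a = k)) = z a"
proof -
  have "(\<Prod>k\<in>(UNIV::'k set). z k ^ of_bool (a = k)) = (\<Prod>k\<in>UNIV. if a = k then z k else 1)"
    by (intro prod.cong) auto
  also have "\<dots> = z a" by (simp add: prod.delta)
  finally show ?thesis .
qed

lemma four_as_prod: "(z a * z b * z c * z d :: real) = (\<Prod>k\<in>(UNIV::'k::finite set). z k ^ cnt a b c d k)"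
  unfolding cnt_def power_add prod.distrib prod_single ..

lemma four_moment:
  fixes a b c d :: "'k::finite"
  shows "integrable (PiM UNIV (\<lambda>_::'k. NN)) (\<lambda>z. z a * z b * z c * z d)"
    and "(\<integral>z. z a * z b * z c * z d \<partial>PiM UNIV (\<lambda>_::'k. NN)) =
       \<sigma>^4 * (of_bool (a = b \<and> c = d) + of_bool (a = c \<and> b = d) + of_bool (a = d \<and> b = c))"
proof -
  show "integrable (PiM UNIV (\<lambda>_::'k. NN)) (\<lambda>z. z a * z b * z c * z d)"
    unfolding four_as_prod by (rule NN_pow_integrable_prod)
  have "(\<integral>z. z a * z b * z c * z d \<partial>PiM UNIV (\<lambda>_::'k. NN)) = (\<Prod>k\<in>UNIV. mom (cnt a b c d k))"
    unfolding four_as_prod by (rule NN_pow_integral_prod)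
  also have "\<dots> = (\<Prod>k\<in>{a,b,c,d}. mom (cnt a b c d k))"
    by (rule prod.mono_neutral_right) (auto simp: cnt_def mom0)
  also have "\<dots> = \<sigma>^4 * (of_bool (a = b \<and> c = d) + of_bool (a = c \<and> b = d) + of_bool (a = d \<and> b = c))"
    by (cases "a = b"; cases "a = c"; cases "a = d"; cases "b = c"; cases "b = d"; cases "c = d")
       (simp_all add: cnt_def mom0 momS power4_eq_xxxx power2_eq_square insert_commute)
  finally show "(\<integral>z. z a * z b * z c * z d \<partial>PiM UNIV (\<lambda>_::'k. NN)) =
       \<sigma>^4 * (of_bool (a = b \<and> c = d) + of_bool (a = c \<and> b = d) + of_bool (a = d \<and> b = c))" .
qed

end


lemma sum_if_c: "(\<Sum>x\<in>A. if P then h x else (0::real)) = (if P then sum h A else 0)" by auto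

lemma sum4_1: fixes Q :: "'k::finite \<Rightarrow> 'k \<Rightarrow> real"
  shows "(\<Sum>a\<in>UNIV. \<Sum>b\<in>UNIV. \<Sum>c\<in>UNIV. \<Sum>d\<in>UNIV. (Q a b * Q c d) * of_bool (a = b \<and> c = d))
   = (\<Sum>a\<in>UNIV. Q a a) ^ 2"
proof -
  have "(\<Sum>a\<in>UNIV. \<Sum>b\<in>UNIV. \<Sum>c\<in>UNIV. \<Sum>d\<in>UNIV. (Q a b * Q c d) * of_bool (a = b \<and> c = d))
    = (\<Sum>a\<in>UNIV. \<Sum>b\<in>UNIV. \<Sum>c\<in>UNIV. \<Sum>d\<in>UNIV. if a = b then (if c = d then Q a b * Q c d else 0) else 0)"
    by (intro sum.cong refl) auto
  also have "\<dots> = (\<Sum>a\<in>UNIV. \<Sum>b\<in>UNIV. if a = b then (\<Sum>c\<in>UNIV. Q a b * Q c c) else 0)"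
    by (simp only: sum_if_c sum.delta' finite UNIV_I if_True)
  also have "\<dots> = (\<Sum>a\<in>UNIV. \<Sum>c\<in>UNIV. Q a a * Q c c)"
    by (simp only: sum.delta' finite UNIV_I if_True)
  also have "\<dots> = (\<Sum>a\<in>UNIV. Q a a) ^ 2"
    by (simp add: power2_eq_square sum_product)
  finally show ?thesis .
qed

lemma sum4_2: fixes Q :: "'k::finite \<Rightarrow> 'k \<Rightarrow> real"
  shows "(\<Sum>a\<in>UNIV. \<Sum>b\<in>UNIV. \<Sum>c\<in>UNIV. \<Sum>d\<in>UNIV. (Q a b * Q c d) * of_bool (a = c \<and> b = d))
   = (\<Sum>a\<in>UNIV. \<Sum>b\<in>UNIV. (Q a b)^2)"
proof -
  have "(\<Sum>a\<in>UNIV. \<Sum>b\<in>UNIV. \<Sum>c\<in>UNIV. \<Sum>d\<in>UNIV. (Q a b * Q c d) * of_bool (a = c \<and> b = d))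
    = (\<Sum>a\<in>UNIV. \<Sum>b\<in>UNIV. \<Sum>c\<in>UNIV. if a = c then (\<Sum>d\<in>UNIV. if b = d then Q a b * Q c d else 0) else 0)"
    by (intro sum.cong refl) auto
  also have "\<dots> = (\<Sum>a\<in>UNIV. \<Sum>b\<in>UNIV. (Q a b)^2)"
    by (simp add: sum.delta sum.delta' power2_eq_square)
  finally show ?thesis .
qed

lemma sum4_3: fixes Q :: "'k::finite \<Rightarrow> 'k \<Rightarrow> real"
  assumes sym: "\<And>a b. Q a b = Q b a"
  shows "(\<Sum>a\<in>UNIV. \<Sum>b\<in>UNIV. \<Sum>c\<in>UNIV. \<Sum>d\<in>UNIV. (Q a b * Q c d) * of_bool (a = d \<and> b = c))
   = (\<Sum>a\<in>UNIV. \<Sum>b\<in>UNIV. (Q a b)^2)"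
proof -
  have "(\<Sum>a\<in>UNIV. \<Sum>b\<in>UNIV. \<Sum>c\<in>UNIV. \<Sum>d\<in>UNIV. (Q a b * Q c d) * of_bool (a = d \<and> b = c))
    = (\<Sum>a\<in>UNIV. \<Sum>b\<in>UNIV. \<Sum>c\<in>UNIV. if b = c then (\<Sum>d\<in>UNIV. if a = d then Q a b * Q c d else 0) else 0)"
    by (intro sum.cong refl) auto
  also have "\<dots> = (\<Sum>a\<in>UNIV. \<Sum>b\<in>UNIV. Q a b * Q b a)"
    by (simp add: sum.delta sum.delta')
  also have "\<dots> = (\<Sum>a\<in>UNIV. \<Sum>b\<in>UNIV. (Q a b)^2)"
    using sym by (simp add: power2_eq_square)
  finally show ?thesis .
qed

lemma quad_square: "(\<Sum>a\<in>(UNIV::'k::finite set). \<Sum>b\<in>UNIV. Q a b * z a * z b :: real)\<^sup>2 =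
   (\<Sum>a\<in>UNIV. \<Sum>b\<in>UNIV. \<Sum>c\<in>UNIV. \<Sum>d\<in>UNIV. (Q a b * Q c d) * (z a * z b * z c * z d))"
proof -
  have "(\<Sum>a\<in>(UNIV::'k::finite set). \<Sum>b\<in>UNIV. Q a b * z a * z b :: real)\<^sup>2 =
    (\<Sum>a\<in>UNIV. \<Sum>b\<in>UNIV. (Q a b * z a * z b) * (\<Sum>c\<in>UNIV. \<Sum>d\<in>UNIV. Q c d * z c * z d))"
    by (simp add: power2_eq_square sum_distrib_right)
  also have "\<dots> = (\<Sum>a\<in>UNIV. \<Sum>b\<in>UNIV. \<Sum>c\<in>UNIV. \<Sum>d\<in>UNIV. (Q a b * z a * z b) * (Q c d * z c * z d))"
    by (simp add: sum_distrib_left)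
  also have "\<dots> = (\<Sum>a\<in>UNIV. \<Sum>b\<in>UNIV. \<Sum>c\<in>UNIV. \<Sum>d\<in>UNIV. (Q a b * Q c d) * (z a * z b * z c * z d))"
    by (simp add: mult_ac)
  finally show ?thesis .
qed

context
  fixes \<sigma> :: real
  assumes sp: "0 < \<sigma>"
begin

lemma quad_moment:
  fixes Q :: "'k::finite \<Rightarrow> 'k \<Rightarrow> real"
  assumes sym: "\<And>a b. Q a b = Q b a"
  shows "integrable (PiM UNIV (\<lambda>_::'k. NN \<sigma>)) (\<lambda>z. (\<Sum>a\<in>UNIV. \<Sum>b\<in>UNIV. Q a b * z a * z b)\<^sup>2)"
    and "(\<integral>z. (\<Sum>a\<in>UNIV. \<Sum>b\<in>UNIV. Q a b * z a * z b)\<^sup>2 \<partial>PiM UNIV (\<lambda>_::'k. NN \<sigma>)) =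
       \<sigma>^4 * ((\<Sum>a\<in>UNIV. Q a a)\<^sup>2 + 2 * (\<Sum>a\<in>UNIV. \<Sum>b\<in>UNIV. (Q a b)\<^sup>2))"
proof -
  let ?P = "PiM UNIV (\<lambda>_::'k. NN \<sigma>)"
  note fm = four_moment[OF sp]
  show "integrable ?P (\<lambda>z. (\<Sum>a\<in>UNIV. \<Sum>b\<in>UNIV. Q a b * z a * z b)\<^sup>2)"
    unfolding quad_square
    apply (rule Bochner_Integration.integrable_sum)+
    apply (rule integrable_mult_right)
    apply (rule fm(1))
    done
  have "(\<integral>z. (\<Sum>a\<in>UNIV. \<Sum>b\<in>UNIV. Q a b * z a * z b)\<^sup>2 \<partial>?P) =
     (\<Sum>a\<in>UNIV. \<Sum>b\<in>UNIV. \<Sum>c\<in>UNIV. \<Sum>d\<in>UNIV. (Q a b * Q c d) * (\<sigma>^4 * (of_bool (a = b \<and> c = d) + of_bool (a = c \<and> b = d) + of_bool (a = d \<and> b = c))))"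
    unfolding quad_square
    by (simp add: Bochner_Integration.integral_sum Bochner_Integration.integrable_sum integrable_mult_right fm del: of_bool_conj)
  also have "\<dots> = \<sigma>^4 * ((\<Sum>a\<in>UNIV. \<Sum>b\<in>UNIV. \<Sum>c\<in>UNIV. \<Sum>d\<in>UNIV. (Q a b * Q c d) * of_bool (a = b \<and> c = d))
      + (\<Sum>a\<in>UNIV. \<Sum>b\<in>UNIV. \<Sum>c\<in>UNIV. \<Sum>d\<in>UNIV. (Q a b * Q c d) * of_bool (a = c \<and> b = d))
      + (\<Sum>a\<in>UNIV. \<Sum>b\<in>UNIV. \<Sum>c\<in>UNIV. \<Sum>d\<in>UNIV. (Q a b * Q c d) * of_bool (a = d \<and> b = c)))"
    by (simp add: sum_distrib_left sum.distrib algebra_simps del: of_bool_conj)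
  also have "\<dots> = \<sigma>^4 * ((\<Sum>a\<in>UNIV. Q a a)\<^sup>2 + 2 * (\<Sum>a\<in>UNIV. \<Sum>b\<in>UNIV. (Q a b)\<^sup>2))"
    unfolding sum4_1 sum4_2 sum4_3[OF sym] by simp
  finally show "(\<integral>z. (\<Sum>a\<in>UNIV. \<Sum>b\<in>UNIV. Q a b * z a * z b)\<^sup>2 \<partial>?P) =
       \<sigma>^4 * ((\<Sum>a\<in>UNIV. Q a a)\<^sup>2 + 2 * (\<Sum>a\<in>UNIV. \<Sum>b\<in>UNIV. (Q a b)\<^sup>2))" .
qed

end


lemma sum_UNIV_Plus: "(\<Sum>a\<in>(UNIV::('n::finite + 'm::finite) set). g a) = (\<Sum>i\<in>UNIV. g (Inl i)) + (\<Sum>j\<in>UNIV. g (Inr j))"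
proof -
  have "(\<Sum>a\<in>(UNIV::('n + 'm) set). g a) = (\<Sum>a\<in>(UNIV <+> UNIV). g a)" by (simp add: UNIV_Plus_UNIV)
  also have "\<dots> = (\<Sum>i\<in>UNIV. g (Inl i)) + (\<Sum>j\<in>UNIV. g (Inr j))" by (subst sum.Plus) (auto simp: comp_def)
  finally show ?thesis .
qed

lemma swap4: "(\<Sum>a\<in>A. \<Sum>b\<in>B. \<Sum>j\<in>C. \<Sum>l\<in>D. F a b j l) = (\<Sum>j\<in>C. \<Sum>l\<in>D. \<Sum>a\<in>A. \<Sum>b\<in>B. (F a b j l :: real))"
proof -
  have "(\<Sum>a\<in>A. \<Sum>b\<in>B. \<Sum>j\<in>C. \<Sum>l\<in>D. F a b j l) = (\<Sum>a\<in>A. \<Sum>j\<in>C. \<Sum>b\<in>B. \<Sum>l\<in>D. F a b j l)"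
    by (rule sum.cong[OF refl], rule sum.swap)
  also have "\<dots> = (\<Sum>a\<in>A. \<Sum>j\<in>C. \<Sum>l\<in>D. \<Sum>b\<in>B. F a b j l)"
    by (rule sum.cong[OF refl], rule sum.cong[OF refl], rule sum.swap)
  also have "\<dots> = (\<Sum>j\<in>C. \<Sum>a\<in>A. \<Sum>l\<in>D. \<Sum>b\<in>B. F a b j l)"
    by (rule sum.swap)
  also have "\<dots> = (\<Sum>j\<in>C. \<Sum>l\<in>D. \<Sum>a\<in>A. \<Sum>b\<in>B. F a b j l)"
    by (rule sum.cong[OF refl], rule sum.swap)
  finally show ?thesis .
qed

lemma sq_sum: "(\<Sum>a\<in>A. x a :: real)\<^sup>2 = (\<Sum>a\<in>A. \<Sum>b\<in>A. x a * x b)"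
  by (simp add: power2_eq_square sum_product)

lemma QQ_swap: fixes c :: "'j::finite \<Rightarrow> 'k::finite \<Rightarrow> real"
  shows "(\<Sum>a\<in>UNIV. \<Sum>b\<in>UNIV. (\<Sum>j\<in>UNIV. c j a * c j b)\<^sup>2) = (\<Sum>j\<in>UNIV. \<Sum>l\<in>UNIV. (\<Sum>a\<in>UNIV. c j a * c l a)\<^sup>2)"
proof -
  have "(\<Sum>a\<in>UNIV. \<Sum>b\<in>UNIV. (\<Sum>j\<in>UNIV. c j a * c j b)\<^sup>2) = (\<Sum>a\<in>UNIV. \<Sum>b\<in>UNIV. \<Sum>j\<in>UNIV. \<Sum>l\<in>UNIV. (c j a * c j b) * (c l a * c l b))"
    by (simp only: sq_sum)
  also have "\<dots> = (\<Sum>j\<in>UNIV. \<Sum>l\<in>UNIV. \<Sum>a\<in>UNIV. \<Sum>b\<in>UNIV. (c j a * c j b) * (c l a * c l b))"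
    by (rule swap4)
  also have "\<dots> = (\<Sum>j\<in>UNIV. \<Sum>l\<in>UNIV. \<Sum>a\<in>UNIV. \<Sum>b\<in>UNIV. (c j a * c l a) * (c j b * c l b))"
    by (simp add: mult_ac)
  also have "\<dots> = (\<Sum>j\<in>UNIV. \<Sum>l\<in>UNIV. (\<Sum>a\<in>UNIV. c j a * c l a)\<^sup>2)"
    by (simp only: sq_sum)
  finally show ?thesis .
qed

lemma quadform: fixes c :: "'j::finite \<Rightarrow> 'k::finite \<Rightarrow> real"
  shows "(\<Sum>j\<in>UNIV. (\<Sum>a\<in>UNIV. c j a * z a)\<^sup>2) = (\<Sum>a\<in>UNIV. \<Sum>b\<in>UNIV. (\<Sum>j\<in>UNIV. c j a * c j b) * z a * z b)"
proof -
  have "(\<Sum>j\<in>UNIV. (\<Sum>a\<in>UNIV. c j a * z a)\<^sup>2) = (\<Sum>j\<in>UNIV. \<Sum>a\<in>UNIV. \<Sum>b\<in>UNIV. (c j a * z a) * (c j b * z b))"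
    by (simp only: sq_sum)
  also have "\<dots> = (\<Sum>a\<in>UNIV. \<Sum>b\<in>UNIV. \<Sum>j\<in>UNIV. (c j a * z a) * (c j b * z b))"
    by (subst sum.swap, rule sum.cong[OF refl], rule sum.swap)
  also have "\<dots> = (\<Sum>a\<in>UNIV. \<Sum>b\<in>UNIV. (\<Sum>j\<in>UNIV. c j a * c j b) * z a * z b)"
    unfolding sum_distrib_right by (simp add: mult_ac)
  finally show ?thesis .
qed

lemma delta_mult: "(\<Sum>l\<in>(UNIV::'m::finite set). (if l = j then 1 else 0) * (g l::real)) = g j"
proof -
  have "(\<Sum>l\<in>(UNIV::'m set). (if l = j then 1 else 0) * g l) = (\<Sum>l\<in>UNIV. if l = j then g l else 0)"
    by (intro sum.cong) auto
  then show ?thesis by simp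
qed

lemma delta_mult2: "(\<Sum>l\<in>(UNIV::'m::finite set). (if l = j then 1 else 0) * (if l = k then 1 else 0)) = (if j = k then 1 else (0::real))"
  using delta_mult[of j "\<lambda>l. if l = k then 1 else 0"] by simp

definition cc :: "real^'n^'m \<Rightarrow> 'm \<Rightarrow> 'n + 'm \<Rightarrow> real" where
  "cc B j a = (case a of Inl i \<Rightarrow> - (B $ j $ i) | Inr l \<Rightarrow> (if l = j then 1 else 0))"

lemma cc_w: "(\<Sum>a\<in>UNIV. cc B j a * z a) = z (Inr j) - (\<Sum>i\<in>UNIV. B $ j $ i * z (Inl i))"
  for B :: "real^'n::finite^'m::finite"
  by (simp add: sum_UNIV_Plus cc_def sum_negf delta_mult)

lemma cc_tr: "(\<Sum>j\<in>UNIV. \<Sum>a\<in>UNIV. cc B j a * cc B j a) = (\<Sum>j\<in>UNIV. \<Sum>i\<in>UNIV. (B$j$i)\<^sup>2) + real CARD('m)"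
  for B :: "real^'n::finite^'m::finite"
  by (simp add: sum_UNIV_Plus cc_def sum.distrib power2_eq_square delta_mult2)

lemma cc_K: "(\<Sum>a\<in>UNIV. cc B j a * cc B l a) = (\<Sum>i\<in>UNIV. B$j$i * B$l$i) + (if j = l then 1 else 0)"
  for B :: "real^'n::finite^'m::finite"
  by (simp add: sum_UNIV_Plus cc_def delta_mult2)

lemma delta_sq_sum: "(\<Sum>j\<in>(UNIV::'m::finite set). \<Sum>l\<in>UNIV. (K j l + (if j = l then 1 else 0))\<^sup>2)
   = (\<Sum>j\<in>UNIV. \<Sum>l\<in>UNIV. (K j l)\<^sup>2) + 2 * (\<Sum>j\<in>UNIV. K j j) + real CARD('m)"
proof -
  have "\<And>j l. (K j l + (if j = l then 1 else 0))\<^sup>2 = (K j l)\<^sup>2 + (if j = l then 2 * K j j + 1 else 0)"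
    by (auto simp: power2_eq_square algebra_simps)
  then show ?thesis by (simp add: sum.distrib sum.delta sum_distrib_left)
qed


lemma aux_div: "(1 / x)\<^sup>2 * (a * b) = a / x\<^sup>2 * (b::real)" by (simp add: power_divide)

context
  fixes \<sigma> :: real
  assumes sp: "0 < \<sigma>"
begin

lemma gauss_main:
  fixes B :: "real^'n::finite^'m::finite"
  defines "S \<equiv> (\<lambda>z::'n + 'm \<Rightarrow> real. ((1 / real CARD('m)) * (\<Sum>j\<in>UNIV. (z (Inr j) - (\<Sum>i\<in>UNIV. B $ j $ i * z (Inl i)))\<^sup>2))\<^sup>2)"
  defines "tK \<equiv> (\<Sum>j\<in>UNIV. \<Sum>i\<in>UNIV. (B$j$i)\<^sup>2)"
  defines "sK \<equiv> (\<Sum>j\<in>UNIV. \<Sum>l\<in>UNIV. (\<Sum>i\<in>UNIV. B$j$i * B$l$i)\<^sup>2)"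
  shows "integrable (PiM UNIV (\<lambda>_. NN \<sigma>)) S"
    and "(\<integral>z. S z \<partial>PiM UNIV (\<lambda>_. NN \<sigma>)) =
       \<sigma>^4 / (real CARD('m))\<^sup>2 * ((real CARD('m) + tK)\<^sup>2 + 2 * (sK + 2 * tK + real CARD('m)))"
proof -
  define Q where "Q a b = (\<Sum>j\<in>UNIV. cc B j a * cc B j b)" for a b
  have Qs: "Q a b = Q b a" for a b unfolding Q_def by (simp add: mult.commute)
  have S_eq: "S z = (1 / real CARD('m))\<^sup>2 * (\<Sum>a\<in>UNIV. \<Sum>b\<in>UNIV. Q a b * z a * z b)\<^sup>2" for z
    unfolding S_def Q_def cc_w[symmetric] quadform power_mult_distrib ..
  note qm = quad_moment[OF sp Qs]
  show "integrable (PiM UNIV (\<lambda>_. NN \<sigma>)) S"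
    unfolding S_eq[abs_def] by (intro integrable_mult_right qm(1))
  have trQ: "(\<Sum>a\<in>UNIV. Q a a) = real CARD('m) + tK"
    unfolding Q_def tK_def by (subst sum.swap, subst cc_tr, simp only: add.commute)
  have sQ: "(\<Sum>a\<in>UNIV. \<Sum>b\<in>UNIV. (Q a b)\<^sup>2) = sK + 2 * tK + real CARD('m)"
    unfolding Q_def by (subst QQ_swap, unfold cc_K delta_sq_sum, unfold sK_def tK_def power2_eq_square, rule refl)
  show "(\<integral>z. S z \<partial>PiM UNIV (\<lambda>_. NN \<sigma>)) =
       \<sigma>^4 / (real CARD('m))\<^sup>2 * ((real CARD('m) + tK)\<^sup>2 + 2 * (sK + 2 * tK + real CARD('m)))"
    unfolding S_eq integral_mult_right_zero qm(2) trQ sQ by (rule aux_div)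
qed

end


lemma minv:
  fixes A :: "real^'p::finite^'p"
  assumes "invertible A"
  shows "A ** matrix_inv A = mat 1" and "matrix_inv A ** A = mat 1"
proof -
  from assms obtain A' where "A ** A' = mat 1 \<and> A' ** A = mat 1" unfolding invertible_def by blast
  then have "A ** matrix_inv A = mat 1 \<and> matrix_inv A ** A = mat 1"
    unfolding matrix_inv_def by (rule someI)
  then show "A ** matrix_inv A = mat 1" and "matrix_inv A ** A = mat 1" by auto
qed

lemma rank_gram_invertible:
  fixes F :: "real^'p::finite^'n::finite"
  assumes "rank F = CARD('p)"
  shows "invertible (transpose F ** F)"
proof -
  have injF: "inj ((*v) F)" using assms full_rank_injective by blast
  have "inj ((*v) (transpose F ** F))"
  proof (rule linear_injective_0[THEN iffD2])
    show "linear ((*v) (transpose F ** F))" by (rule matrix_vector_mul_linear)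
    show "\<forall>x. (transpose F ** F) *v x = 0 \<longrightarrow> x = 0"
    proof (intro allI impI)
      fix x assume "(transpose F ** F) *v x = 0"
      then have "x \<bullet> ((transpose F ** F) *v x) = 0" by simp
      then have "x \<bullet> ((F *v x) v* F) = 0" by (simp flip: matrix_vector_mul_assoc)
      then have "((F *v x) v* F) \<bullet> x = 0" by (simp add: inner_commute)
      then have "(F *v x) \<bullet> (F *v x) = 0" by (simp add: dot_lmul_matrix)
      then have "F *v x = 0" by simp
      then show "x = 0" using injF by (metis matrix_vector_mult_0_right injD)
    qed
  qed
  then obtain B where B: "B ** (transpose F ** F) = mat 1"
    using matrix_left_invertible_injective by blast
  then have "(transpose F ** F) ** B = mat 1" using matrix_left_right_inverse by blast
  with B show ?thesis unfolding invertible_def by blast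
qed

lemma trace_scaleR: "trace (c *\<^sub>R A) = c * trace (A :: real^'n::finite^'n)"
  by (simp add: trace_def sum_distrib_left)

lemma scaleR_mm1: "(c *\<^sub>R A) ** B = c *\<^sub>R (A ** B)" for A :: "real^'n::finite^'m::finite" and B :: "real^'k::finite^'n"
  by (simp add: scalar_matrix_assoc)

lemma scaleR_mm2: "A ** (c *\<^sub>R B) = c *\<^sub>R (A ** B)" for A :: "real^'n::finite^'m::finite" and B :: "real^'k::finite^'n"
  by (simp add: matrix_scalar_ac scalar_matrix_assoc)

lemma trace_prop:
  fixes Fx :: "real^'p::finite^'n::finite" and Fu :: "real^'p^'m::finite"
  assumes inv: "invertible (transpose Fx ** Fx)"
    and ms: "(1 / real CARD('n)) *\<^sub>R (transpose Fx ** Fx) = (1 / real CARD('m)) *\<^sub>R (transpose Fu ** Fu)"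
  defines "B \<equiv> Fu ** (matrix_inv (transpose Fx ** Fx) ** transpose Fx)"
  shows "trace (B ** transpose B) = real CARD('m) / real CARD('n) * real CARD('p)"
    and "trace ((B ** transpose B) ** (B ** transpose B)) = (real CARD('m) / real CARD('n))\<^sup>2 * real CARD('p)"
proof -
  define G where "G = transpose Fx ** Fx"
  define Gi where "Gi = matrix_inv G"
  define c where "c = real CARD('m) / real CARD('n)"
  have GiG: "Gi ** G = mat 1" and GGi: "G ** Gi = mat 1" using minv[OF inv] unfolding G_def Gi_def by auto
  have tG: "transpose G = G" unfolding G_def by (simp add: matrix_transpose_mul)
  have tGiG: "transpose Gi ** G = mat 1"
  proof -
    have "transpose Gi ** G = transpose (G ** Gi)" by (simp add: matrix_transpose_mul tG)
    then show ?thesis by (simp add: GGi)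
  qed
  have Hu: "transpose Fu ** Fu = c *\<^sub>R G"
  proof -
    have "real CARD('m) *\<^sub>R ((1 / real CARD('n)) *\<^sub>R G) = real CARD('m) *\<^sub>R ((1 / real CARD('m)) *\<^sub>R (transpose Fu ** Fu))"
      using ms unfolding G_def by simp
    then show ?thesis by (simp add: c_def)
  qed
  have K: "B ** transpose B = Fu ** transpose Gi ** transpose Fu"
  proof -
    have "B ** transpose B = Fu ** (Gi ** transpose Fx) ** (Fx ** transpose Gi ** transpose Fu)"
      unfolding B_def G_def[symmetric] Gi_def[symmetric] by (simp add: matrix_transpose_mul matrix_mul_assoc)
    also have "\<dots> = Fu ** (Gi ** G) ** transpose Gi ** transpose Fu"
      unfolding G_def by (simp add: matrix_mul_assoc)
    also have "\<dots> = Fu ** transpose Gi ** transpose Fu" by (simp add: GiG)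
    finally show ?thesis .
  qed
  have trK: "trace (B ** transpose B) = c * real CARD('p)"
  proof -
    have "trace (B ** transpose B) = trace (Fu ** (transpose Gi ** transpose Fu))"
      unfolding K by (simp only: matrix_mul_assoc)
    also have "\<dots> = trace ((transpose Gi ** transpose Fu) ** Fu)" by (rule trace_mul_sym)
    also have "\<dots> = trace (transpose Gi ** (transpose Fu ** Fu))" by (simp only: matrix_mul_assoc)
    also have "\<dots> = trace (transpose Gi ** (c *\<^sub>R G))" by (simp only: Hu)
    also have "\<dots> = c * trace (transpose Gi ** G)" by (simp only: scaleR_mm2 trace_scaleR)
    also have "\<dots> = c * real CARD('p)" by (simp add: tGiG trace_I)
    finally show ?thesis .
  qed
  have KK: "(B ** transpose B) ** (B ** transpose B) = c *\<^sub>R (B ** transpose B)"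
  proof -
    have "(B ** transpose B) ** (B ** transpose B) = Fu ** transpose Gi ** (transpose Fu ** Fu) ** transpose Gi ** transpose Fu"
      unfolding K by (simp add: matrix_mul_assoc)
    also have "\<dots> = c *\<^sub>R (Fu ** (transpose Gi ** G) ** transpose Gi ** transpose Fu)"
      unfolding Hu by (simp only: matrix_mul_assoc scaleR_mm1 scaleR_mm2)
    also have "\<dots> = c *\<^sub>R (B ** transpose B)" unfolding K by (simp add: tGiG)
    finally show ?thesis .
  qed
  show "trace (B ** transpose B) = real CARD('m) / real CARD('n) * real CARD('p)"
    using trK by (simp add: c_def)
  show "trace ((B ** transpose B) ** (B ** transpose B)) = (real CARD('m) / real CARD('n))\<^sup>2 * real CARD('p)"
    unfolding KK trace_scaleR trK by (simp add: c_def power2_eq_square)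
qed

lemma tK_trace: "(\<Sum>j\<in>UNIV. \<Sum>i\<in>UNIV. (B$j$i)\<^sup>2) = trace (B ** transpose B)"
  for B :: "real^'n::finite^'m::finite"
  by (simp add: trace_def matrix_matrix_mult_def transpose_def power2_eq_square)

lemma sK_trace: "(\<Sum>j\<in>UNIV. \<Sum>l\<in>UNIV. (\<Sum>i\<in>UNIV. B$j$i * B$l$i)\<^sup>2) = trace ((B ** transpose B) ** (B ** transpose B))"
  for B :: "real^'n::finite^'m::finite"
  by (simp add: trace_def matrix_matrix_mult_def transpose_def power2_eq_square mult.commute)


lemma design_row: "design f xs $ i = f (xs i)" by (simp add: design_def)

lemma row_inner: "f (xs i) \<bullet> v = (design f xs *v v) $ i"
  by (simp add: design_def matrix_vector_mult_def inner_vec_def mult.commute)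

lemma model_identity:
  fixes f :: "'d \<Rightarrow> real^'p::finite" and xs :: "'n::finite \<Rightarrow> 'd" and us :: "'m::finite \<Rightarrow> 'd"
  assumes inv: "invertible (transpose (design f xs) ** design f xs)"
  shows "test_error f us (\<lambda>j. f (us j) \<bullet> \<beta> + \<epsilon> j) (ols (design f xs :: real^'p^'n) (\<chi> i. f (xs i) \<bullet> \<beta> + e i))
    = (1 / real CARD('m)) * (\<Sum>j\<in>UNIV. (\<epsilon> j - (\<Sum>i\<in>UNIV. (design f us ** (matrix_inv (transpose (design f xs) ** design f xs) ** transpose (design f xs))) $ j $ i * e i))\<^sup>2)"
proof -
  define Fx :: "real^'p^'n" where "Fx = design f xs"
  define Fu :: "real^'p^'m" where "Fu = design f us"
  define Gi where "Gi = matrix_inv (transpose Fx ** Fx)"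
  define ev :: "real^'n" where "ev = (\<chi> i. e i)"
  have GiG: "Gi ** (transpose Fx ** Fx) = mat 1" using minv(2)[OF inv] unfolding Gi_def Fx_def .
  have y: "(\<chi> i. f (xs i) \<bullet> \<beta> + e i) = Fx *v \<beta> + ev"
    unfolding Fx_def ev_def by (simp add: vec_eq_iff row_inner)
  have b: "ols Fx (\<chi> i. f (xs i) \<bullet> \<beta> + e i) = \<beta> + (Gi ** transpose Fx) *v ev"
  proof -
    have "ols Fx (\<chi> i. f (xs i) \<bullet> \<beta> + e i) = (Gi ** transpose Fx) *v (Fx *v \<beta>) + (Gi ** transpose Fx) *v ev"
      unfolding ols_def y Gi_def by (simp add: matrix_vector_right_distrib)
    also have "(Gi ** transpose Fx) *v (Fx *v \<beta>) = \<beta>"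
      by (simp add: matrix_vector_mul_assoc matrix_mul_assoc[symmetric] GiG)
    finally show ?thesis .
  qed
  have r: "f (us j) \<bullet> (\<beta> + (Gi ** transpose Fx) *v ev) = f (us j) \<bullet> \<beta> + (\<Sum>i\<in>UNIV. (Fu ** (Gi ** transpose Fx)) $ j $ i * e i)" for j
  proof -
    have "f (us j) \<bullet> ((Gi ** transpose Fx) *v ev) = (Fu *v ((Gi ** transpose Fx) *v ev)) $ j"
      unfolding Fu_def by (rule row_inner)
    also have "\<dots> = (\<Sum>i\<in>UNIV. (Fu ** (Gi ** transpose Fx)) $ j $ i * e i)"
      unfolding matrix_vector_mul_assoc by (simp add: matrix_vector_mult_def ev_def)
    finally show ?thesis by (simp add: inner_add_right)
  qed
  show ?thesis
    unfolding test_error_def Fx_def[symmetric] Fu_def[symmetric] Gi_def[symmetric] b r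
    by simp
qed


lemma minv_formula:
  fixes A :: "real^'p::finite^'p"
  shows "matrix_inv A $ k $ j = (if det A \<noteq> 0 then det (\<chi> a b. if b = k then (if a = j then 1 else 0) else A$a$b) / det A
     else matrix_inv (0::real^'p^'p) $ k $ j)"
proof (cases "det A = 0")
  case False
  then have inv: "invertible A" by (simp add: invertible_det_nz)
  define x :: "real^'p" where "x = (\<chi> k. matrix_inv A $ k $ j)"
  define bb :: "real^'p" where "bb = (\<chi> a. if a = j then 1 else 0)"
  have "A *v x = bb"
  proof -
    have "(A *v x) $ i = (A ** matrix_inv A) $ i $ j" for i
      by (simp add: x_def matrix_vector_mult_def matrix_matrix_mult_def)
    then show ?thesis using minv(1)[OF inv] by (simp add: vec_eq_iff bb_def mat_def)
  qed
  then have "x = (\<chi> k. det(\<chi> i j. if j=k then bb$i else A$i$j) / det A)"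
    using cramer[OF False] by blast
  then have "x $ k = det(\<chi> i j. if j=k then bb$i else A$i$j) / det A" by simp
  moreover have "(\<chi> i j'. if j' = k then bb$i else A$i$j') = (\<chi> a b'. if b' = k then (if a = j then 1 else 0) else A$a$b')"
    by (simp add: bb_def vec_eq_iff)
  ultimately show ?thesis using False by (simp add: x_def)
next
  case True
  then have ninv: "\<not> invertible A" by (simp add: invertible_det_nz)
  have ninv0: "\<not> invertible (0::real^'p^'p)"
  proof
    assume "invertible (0::real^'p^'p)"
    then obtain A' :: "real^'p^'p" where "0 ** A' = mat 1" unfolding invertible_def by blast
    then have "(0::real^'p^'p) = mat 1" by simp
    then have "(0::real^'p^'p) $ k $ k = mat 1 $ k $ k" by simp
    then show False by (simp add: mat_def)
  qed
  have "(\<lambda>A'. A ** A' = mat 1 \<and> A' ** A = mat 1) = (\<lambda>A'. (0::real^'p^'p) ** A' = mat 1 \<and> A' ** 0 = mat 1)"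
    using ninv ninv0 unfolding invertible_def by (auto simp: fun_eq_iff)
  then have "matrix_inv A = matrix_inv (0::real^'p^'p)" unfolding matrix_inv_def by simp
  then show ?thesis using True by simp
qed

lemma meas_det:
  assumes [measurable]: "\<And>a b. (\<lambda>x. g x a b) \<in> borel_measurable M"
  shows "(\<lambda>x. det (\<chi> a b. g x a b) :: real) \<in> borel_measurable (M::'x measure)"
  unfolding det_def by (simp only: vec_lambda_beta) measurable

lemma meas_vec_nth[measurable]: "(\<lambda>v::real^'p::finite. v $ a) \<in> borel_measurable borel"
  by (intro borel_measurable_continuous_onI continuous_intros)


definition gram :: "('d \<Rightarrow> real^'p::finite) \<Rightarrow> ('n::finite \<Rightarrow> 'd) \<Rightarrow> real^'p^'p" where
  "gram f xs = (\<chi> a b. \<Sum>i\<in>UNIV. f (xs i) $ a * f (xs i) $ b)"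

lemma gram_eq: "transpose (design f xs :: real^'p::finite^'n::finite) ** design f xs = gram f xs"
  by (simp add: gram_def design_def matrix_matrix_mult_def transpose_def)

definition cramer_inv :: "real^'p::finite^'p \<Rightarrow> 'p \<Rightarrow> 'p \<Rightarrow> real" where
  "cramer_inv A k j = (if det A \<noteq> 0 then det (\<chi> a b. if b = k then (if a = j then 1 else 0) else A$a$b) / det A
     else matrix_inv (0::real^'p^'p) $ k $ j)"

lemma TE_formula:
  fixes f :: "'d \<Rightarrow> real^'p::finite" and xs :: "'n::finite \<Rightarrow> 'd" and us :: "'m::finite \<Rightarrow> 'd"
  shows "(test_error f us vs (ols (design f xs :: real^'p^'n) (\<chi> i. ys i)))\<^sup>2 =
    ((1 / real CARD('m)) * (\<Sum>j\<in>UNIV. (vs j - (\<Sum>a\<in>UNIV. f (us j) $ a *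
        (\<Sum>i\<in>UNIV. (\<Sum>b\<in>UNIV. cramer_inv (gram f xs) a b * f (xs i) $ b) * ys i)))\<^sup>2))\<^sup>2"
proof -
  have mi: "matrix_inv (transpose (design f xs :: real^'p^'n) ** design f xs) = (\<chi> a b. cramer_inv (gram f xs) a b)"
    unfolding gram_eq by (simp add: vec_eq_iff minv_formula cramer_inv_def)
  show ?thesis
    unfolding test_error_def ols_def mi
    by (simp add: inner_vec_def matrix_vector_mult_def matrix_matrix_mult_def transpose_def design_def)
qed

lemma TE_meas:
  fixes f :: "'d::euclidean_space \<Rightarrow> real^'p::finite" and X :: "'w \<Rightarrow> 'n::finite \<Rightarrow> 'd" and U :: "'w \<Rightarrow> 'm::finite \<Rightarrow> 'd"
  assumes [measurable]: "f \<in> borel_measurable borel"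
    and [measurable]: "\<And>i. (\<lambda>w. X w i) \<in> borel_measurable M" "\<And>i. (\<lambda>w. Yv w i) \<in> borel_measurable M"
        "\<And>j. (\<lambda>w. U w j) \<in> borel_measurable M" "\<And>j. (\<lambda>w. V w j) \<in> borel_measurable M"
  shows "(\<lambda>w. (test_error f (U w) (V w) (ols (design f (X w) :: real^'p^'n) (\<chi> i. Yv w i)))\<^sup>2) \<in> borel_measurable M"
proof -
  have [measurable]: "(\<lambda>w. f (X w i) $ a) \<in> borel_measurable M" for i a by measurable
  have [measurable]: "(\<lambda>w. f (U w j) $ a) \<in> borel_measurable M" for j a by measurable
  have g[measurable]: "(\<lambda>w. \<Sum>i\<in>UNIV. f (X w i) $ a * f (X w i) $ b) \<in> borel_measurable M" for a b by measurable
  have [measurable]: "(\<lambda>w. gram f (X w) $ a $ b) \<in> borel_measurable M" for a b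
    unfolding gram_def using g by simp
  have [measurable]: "(\<lambda>w. det (gram f (X w))) \<in> borel_measurable M"
    unfolding gram_def by (rule meas_det) (rule g)
  have [measurable]: "(\<lambda>w. det (\<chi> a b. if b = k then (if a = j then 1 else 0) else gram f (X w) $ a $ b)) \<in> borel_measurable M" for k j
    by (rule meas_det) measurable
  have [measurable]: "(\<lambda>w. cramer_inv (gram f (X w)) a b) \<in> borel_measurable M" for a b
    unfolding cramer_inv_def by measurable
  show ?thesis unfolding TE_formula by measurable
qed


lemma prod_indicator_ennreal:
  assumes "finite I"
  shows "(\<Prod>k\<in>I. indicator (F k) (g k) :: ennreal) = (if \<forall>k\<in>I. g k \<in> F k then 1 else 0)"
  using assms by (auto simp: indicator_def)

lemma PiM_split:
  fixes A :: "'a measure" and B :: "'b measure" and I :: "'i set"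
  assumes pA: "prob_space A" and pB: "prob_space B" and I: "finite I"
  shows "distr (PiM I (\<lambda>_. A) \<Otimes>\<^sub>M PiM I (\<lambda>_. B)) (PiM I (\<lambda>_. A \<Otimes>\<^sub>M B)) (\<lambda>(x,e). \<lambda>k\<in>I. (x k, e k)) = PiM I (\<lambda>_. A \<Otimes>\<^sub>M B)"
proof -
  interpret A: prob_space A by fact
  interpret B: prob_space B by fact
  interpret AB: pair_prob_space A B by unfold_locales
  interpret P: product_prob_space "\<lambda>_. A \<Otimes>\<^sub>M B" by (rule product_prob_spaceI) (simp add: AB.prob_space_axioms)
  interpret PA: product_prob_space "\<lambda>_. A" by (rule product_prob_spaceI) (simp add: A.prob_space_axioms)
  interpret PB: product_prob_space "\<lambda>_. B" by (rule product_prob_spaceI) (simp add: B.prob_space_axioms)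
  interpret PAs: prob_space "PiM I (\<lambda>_. A)" by (rule prob_space_PiM) (simp add: A.prob_space_axioms)
  have sfB: "sigma_finite_measure (PiM I (\<lambda>_. B))"
    by (rule prob_space_imp_sigma_finite, rule prob_space_PiM) (simp add: B.prob_space_axioms)
  interpret PP: pair_prob_space "PiM I (\<lambda>_. A)" "PiM I (\<lambda>_. B)" by unfold_locales
  define \<phi> where "\<phi> = (\<lambda>(x::'i\<Rightarrow>'a, e::'i\<Rightarrow>'b). \<lambda>k\<in>I. (x k, e k))"
  have \<phi>m: "\<phi> \<in> measurable (PiM I (\<lambda>_. A) \<Otimes>\<^sub>M PiM I (\<lambda>_. B)) (PiM I (\<lambda>_. A \<Otimes>\<^sub>M B))"
    unfolding \<phi>_def by measurable
  show ?thesis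
    unfolding \<phi>_def[symmetric]
  proof (rule P.PiM_eqI[OF I])
    show "sets (distr (PiM I (\<lambda>_. A) \<Otimes>\<^sub>M PiM I (\<lambda>_. B)) (PiM I (\<lambda>_. A \<Otimes>\<^sub>M B)) \<phi>) = sets (PiM I (\<lambda>_. A \<Otimes>\<^sub>M B))"
      by simp
    fix F assume F: "\<And>k. k \<in> I \<Longrightarrow> F k \<in> sets (A \<Otimes>\<^sub>M B)"
    define S where "S = \<phi> -` Pi\<^sub>E I F \<inter> space (PiM I (\<lambda>_. A) \<Otimes>\<^sub>M PiM I (\<lambda>_. B))"
    have PiF: "Pi\<^sub>E I F \<in> sets (PiM I (\<lambda>_. A \<Otimes>\<^sub>M B))" using F I by (simp add: sets_PiM_I_finite)
    have Ss: "S \<in> sets (PiM I (\<lambda>_. A) \<Otimes>\<^sub>M PiM I (\<lambda>_. B))"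
      unfolding S_def using \<phi>m PiF by (rule measurable_sets)
    have hm: "(\<lambda>a. \<integral>\<^sup>+ b. indicator (F k) (a, b) \<partial>B) \<in> borel_measurable A" if "k \<in> I" for k
      by (intro B.borel_measurable_nn_integral_fst borel_measurable_indicator F that)
    have "emeasure (distr (PiM I (\<lambda>_. A) \<Otimes>\<^sub>M PiM I (\<lambda>_. B)) (PiM I (\<lambda>_. A \<Otimes>\<^sub>M B)) \<phi>) (Pi\<^sub>E I F)
        = emeasure (PiM I (\<lambda>_. A) \<Otimes>\<^sub>M PiM I (\<lambda>_. B)) S"
      unfolding S_def by (rule emeasure_distr[OF \<phi>m PiF])
    also have "\<dots> = (\<integral>\<^sup>+ x. \<integral>\<^sup>+ e. indicator S (x, e) \<partial>PiM I (\<lambda>_. B) \<partial>PiM I (\<lambda>_. A))"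
      by (rule sigma_finite_measure.emeasure_pair_measure[OF sfB Ss])
    also have "\<dots> = (\<integral>\<^sup>+ x. \<integral>\<^sup>+ e. (\<Prod>k\<in>I. indicator (F k) (x k, e k)) \<partial>PiM I (\<lambda>_. B) \<partial>PiM I (\<lambda>_. A))"
    proof (intro nn_integral_cong)
      fix x e assume x: "x \<in> space (PiM I (\<lambda>_. A))" and e: "e \<in> space (PiM I (\<lambda>_. B))"
      have "(x, e) \<in> S \<longleftrightarrow> (\<forall>k\<in>I. (x k, e k) \<in> F k)"
        using x e by (auto simp: S_def \<phi>_def space_pair_measure PiE_iff)
      then show "indicator S (x, e) = (\<Prod>k\<in>I. indicator (F k) (x k, e k) :: ennreal)"
        using I by (simp add: prod_indicator_ennreal indicator_def)
    qed
    also have "\<dots> = (\<integral>\<^sup>+ x. (\<Prod>k\<in>I. \<integral>\<^sup>+ b. indicator (F k) (x k, b) \<partial>B) \<partial>PiM I (\<lambda>_. A))"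
    proof (intro nn_integral_cong)
      fix x assume x: "x \<in> space (PiM I (\<lambda>_. A))"
      show "(\<integral>\<^sup>+ e. (\<Prod>k\<in>I. indicator (F k) (x k, e k)) \<partial>PiM I (\<lambda>_. B)) = (\<Prod>k\<in>I. \<integral>\<^sup>+ b. indicator (F k) (x k, b) \<partial>B)"
      proof (rule PB.product_nn_integral_prod[OF I])
        fix k assume k: "k \<in> I"
        have "x k \<in> space A" using x k by (auto simp: space_PiM)
        then show "(\<lambda>b. indicator (F k) (x k, b) :: ennreal) \<in> borel_measurable B"
          using F[OF k] by measurable
      qed
    qed
    also have "\<dots> = (\<Prod>k\<in>I. \<integral>\<^sup>+ a. \<integral>\<^sup>+ b. indicator (F k) (a, b) \<partial>B \<partial>A)"
      by (rule PA.product_nn_integral_prod[OF I hm])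
    also have "\<dots> = (\<Prod>k\<in>I. emeasure (A \<Otimes>\<^sub>M B) (F k))"
      using F by (intro prod.cong refl B.emeasure_pair_measure[symmetric]) auto
    finally show "emeasure (distr (PiM I (\<lambda>_. A) \<Otimes>\<^sub>M PiM I (\<lambda>_. B)) (PiM I (\<lambda>_. A \<Otimes>\<^sub>M B)) \<phi>) (Pi\<^sub>E I F)
        = (\<Prod>k\<in>I. emeasure (A \<Otimes>\<^sub>M B) (F k))" .
  qed
qed


lemma final_arith:
  fixes m n p s :: real
  assumes "m > 0" "n > 0"
  shows "s^4 / m\<^sup>2 * ((m + m / n * p)\<^sup>2 + 2 * ((m / n)\<^sup>2 * p + 2 * (m / n * p) + m))
     = s^4 * ((1 + p / n)\<^sup>2 + 2 / m + 4 * p / (m * n) + 2 * p / n\<^sup>2)"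
  using assms by (simp add: field_simps power2_eq_square)

lemma inner_integral:
  fixes f :: "'d \<Rightarrow> real^'p::finite" and \<beta> :: "real^'p" and xs :: "'n::finite \<Rightarrow> 'd" and us :: "'m::finite \<Rightarrow> 'd"
  assumes sp: "0 < \<sigma>"
    and inv: "invertible (transpose (design f xs :: real^'p^'n) ** design f xs)"
    and ms: "(1 / real CARD('n)) *\<^sub>R (transpose (design f xs) ** (design f xs :: real^'p^'n))
         = (1 / real CARD('m)) *\<^sub>R (transpose (design f us) ** (design f us :: real^'p^'m))"
  defines "Sf \<equiv> (\<lambda>z::'n + 'm \<Rightarrow> real. (test_error f us (\<lambda>j. f (us j) \<bullet> \<beta> + z (Inr j)) (ols (design f xs :: real^'p^'n) (\<chi> i. f (xs i) \<bullet> \<beta> + z (Inl i))))\<^sup>2)"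
  shows "integrable (PiM UNIV (\<lambda>_. NN \<sigma>)) Sf"
    and "(\<integral>z. Sf z \<partial>PiM UNIV (\<lambda>_. NN \<sigma>)) = \<sigma>^4 * ((1 + real CARD('p) / real CARD('n))\<^sup>2 + 2 / real CARD('m)
                 + 4 * real CARD('p) / (real CARD('m) * real CARD('n))
                 + 2 * real CARD('p) / (real CARD('n))\<^sup>2)"
proof -
  define B where "B = design f us ** (matrix_inv (transpose (design f xs) ** design f xs) ** transpose (design f xs :: real^'p^'n))"
  have Sf_eq: "Sf = (\<lambda>z::'n + 'm \<Rightarrow> real. ((1 / real CARD('m)) * (\<Sum>j\<in>UNIV. (z (Inr j) - (\<Sum>i\<in>UNIV. B $ j $ i * z (Inl i)))\<^sup>2))\<^sup>2)"
    unfolding Sf_def B_def by (simp add: model_identity[OF inv])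
  note gm = gauss_main[OF sp, of B]
  show "integrable (PiM UNIV (\<lambda>_. NN \<sigma>)) Sf" unfolding Sf_eq by (rule gm(1))
  have tK: "(\<Sum>j\<in>UNIV. \<Sum>i\<in>UNIV. (B$j$i)\<^sup>2) = real CARD('m) / real CARD('n) * real CARD('p)"
    unfolding tK_trace B_def by (rule trace_prop(1)[OF inv ms])
  have sK: "(\<Sum>j\<in>UNIV. \<Sum>l\<in>UNIV. (\<Sum>i\<in>UNIV. B$j$i * B$l$i)\<^sup>2) = (real CARD('m) / real CARD('n))\<^sup>2 * real CARD('p)"
    unfolding sK_trace B_def by (rule trace_prop(2)[OF inv ms])
  show "(\<integral>z. Sf z \<partial>PiM UNIV (\<lambda>_. NN \<sigma>)) = \<sigma>^4 * ((1 + real CARD('p) / real CARD('n))\<^sup>2 + 2 / real CARD('m)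
                 + 4 * real CARD('p) / (real CARD('m) * real CARD('n))
                 + 2 * real CARD('p) / (real CARD('n))\<^sup>2)"
    unfolding Sf_eq gm(2) tK sK by (rule final_arith) auto
qed


theorem mainTheorem2:
  fixes M :: "'a measure"
    and Px :: "'d::euclidean_space measure"
    and f :: "'d \<Rightarrow> real^'p::finite"
    and \<beta> :: "real^'p"
    and \<sigma> :: real
    and X :: "'n::finite \<Rightarrow> 'a \<Rightarrow> 'd" and Y :: "'n \<Rightarrow> 'a \<Rightarrow> real"
    and U :: "'m::finite \<Rightarrow> 'a \<Rightarrow> 'd" and V :: "'m \<Rightarrow> 'a \<Rightarrow> real"
  assumes "prob_space M"
    and "prob_space Px" and "sets Px = sets borel"
    and "f \<in> borel_measurable borel"
    and "\<sigma> > 0"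
    and "CARD('p) \<le> CARD('n)"
    and "prob_space.indep_vars M (\<lambda>_. borel \<Otimes>\<^sub>M borel)
           (\<lambda>k \<omega>. case k of Inl i \<Rightarrow> (X i \<omega>, Y i \<omega>) | Inr j \<Rightarrow> (U j \<omega>, V j \<omega>))
           (UNIV :: ('n + 'm) set)"
    and "\<And>i. distr M (borel \<Otimes>\<^sub>M borel) (\<lambda>\<omega>. (X i \<omega>, Y i \<omega>)) = row_distr Px f \<beta> \<sigma>"
    and "\<And>j. distr M (borel \<Otimes>\<^sub>M borel) (\<lambda>\<omega>. (U j \<omega>, V j \<omega>)) = row_distr Px f \<beta> \<sigma>"
    and "AE \<omega> in M. rank (design f (\<lambda>i. X i \<omega>) :: real^'p^'n) = CARD('p)"
    and "AE \<omega> in M.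
           (1 / real CARD('n)) *\<^sub>R (transpose (design f (\<lambda>i. X i \<omega>)) ** (design f (\<lambda>i. X i \<omega>) :: real^'p^'n))
         = (1 / real CARD('m)) *\<^sub>R (transpose (design f (\<lambda>j. U j \<omega>)) ** (design f (\<lambda>j. U j \<omega>) :: real^'p^'m))"
  shows "prob_space.expectation M
           (\<lambda>\<omega>. (test_error f (\<lambda>j. U j \<omega>) (\<lambda>j. V j \<omega>)
                   (ols (design f (\<lambda>i. X i \<omega>) :: real^'p^'n) (\<chi> i. Y i \<omega>)))\<^sup>2)
       = \<sigma>^4 * ((1 + real CARD('p) / real CARD('n))\<^sup>2 + 2 / real CARD('m)
                 + 4 * real CARD('p) / (real CARD('m) * real CARD('n))
                 + 2 * real CARD('p) / (real CARD('n))\<^sup>2)"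
proof -
  note pM = assms(1) and pPx = assms(2) and sPx = assms(3) and fm[measurable] = assms(4) and sp = assms(5)
    and ind = assms(7) and dX = assms(8) and dU = assms(9) and rk = assms(10) and ms = assms(11)
  interpret M: prob_space M by (rule pM)
  interpret Px: prob_space Px by (rule pPx)
  define c where "c = \<sigma>^4 * ((1 + real CARD('p) / real CARD('n))\<^sup>2 + 2 / real CARD('m)
                 + 4 * real CARD('p) / (real CARD('m) * real CARD('n))
                 + 2 * real CARD('p) / (real CARD('n))\<^sup>2)"
  define I where "I = (UNIV :: ('n + 'm) set)"
  define W where "W = (\<lambda>k \<omega>. case k of Inl i \<Rightarrow> (X i \<omega>, Y i \<omega>) | Inr j \<Rightarrow> (U j \<omega>, V j \<omega>))"
  define B2 where "B2 = (borel \<Otimes>\<^sub>M borel :: ('d \<times> real) measure)"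
  define Rd where "Rd = row_distr Px f \<beta> \<sigma>"
  define P0 where "P0 = Px \<Otimes>\<^sub>M NN \<sigma>"
  define T where "T = (\<lambda>(x::'d, e::real). (x, f x \<bullet> \<beta> + e))"
  define Hf where "Hf = (\<lambda>w::('n + 'm) \<Rightarrow> 'd \<times> real. (test_error f (\<lambda>j. fst (w (Inr j))) (\<lambda>j. snd (w (Inr j)))
          (ols (design f (\<lambda>i. fst (w (Inl i))) :: real^'p^'n) (\<chi> i. snd (w (Inl i)))))\<^sup>2)"
  interpret NN: prob_space "NN \<sigma>" by (rule NN_prob[OF sp])
  interpret P0: pair_prob_space Px "NN \<sigma>" by unfold_locales
  have pP0: "prob_space P0" unfolding P0_def by (rule P0.prob_space_axioms)
  have Rd_def': "Rd = distr P0 B2 T" unfolding Rd_def row_distr_def P0_def B2_def T_def by (simp add: NN_def[OF sp])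
  have sP0: "sets P0 = sets B2" unfolding P0_def B2_def by (rule sets_pair_measure_cong) (simp_all add: sPx NN_sets[OF sp])
  have Tm: "T \<in> measurable P0 B2"
    unfolding T_def measurable_cong_sets[OF sP0 refl] B2_def by measurable
  have pRd: "prob_space Rd" unfolding Rd_def' by (rule prob_space.prob_space_distr[OF pP0 Tm])
  have sRd: "sets Rd = sets B2" unfolding Rd_def' by simp
  have rv: "W k \<in> measurable M B2" for k
    using ind unfolding M.indep_vars_def W_def B2_def by auto
  have dW: "distr M B2 (W k) = Rd" for k
    using dX dU unfolding W_def B2_def Rd_def by (cases k) auto
  have DW: "distr M (PiM I (\<lambda>_. B2)) (\<lambda>\<omega>. \<lambda>k\<in>I. W k \<omega>) = PiM I (\<lambda>_. Rd)"
  proof -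
    have "distr M (PiM I (\<lambda>_. B2)) (\<lambda>\<omega>. \<lambda>k\<in>I. W k \<omega>) = PiM I (\<lambda>k. distr M B2 (W k))"
      using M.indep_vars_iff_distr_eq_PiM[where I=I and M'="\<lambda>_. B2" and X=W] rv ind unfolding I_def W_def B2_def by auto
    also have "\<dots> = PiM I (\<lambda>_. Rd)" by (simp add: dW)
    finally show ?thesis .
  qed
  have Wm: "(\<lambda>\<omega>. \<lambda>k\<in>I. W k \<omega>) \<in> measurable M (PiM I (\<lambda>_. B2))"
    by (rule measurable_restrict) (rule rv)
  have Hfm: "Hf \<in> borel_measurable (PiM I (\<lambda>_. B2))"
    unfolding Hf_def by (rule TE_meas) (simp_all add: I_def B2_def)
  have step1: "M.expectation (\<lambda>\<omega>. (test_error f (\<lambda>j. U j \<omega>) (\<lambda>j. V j \<omega>)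
                   (ols (design f (\<lambda>i. X i \<omega>) :: real^'p^'n) (\<chi> i. Y i \<omega>)))\<^sup>2)
      = (\<integral>w. Hf w \<partial>PiM I (\<lambda>_. Rd))"
  proof -
    have "(\<integral>w. Hf w \<partial>PiM I (\<lambda>_. Rd)) = (\<integral>w. Hf w \<partial>distr M (PiM I (\<lambda>_. B2)) (\<lambda>\<omega>. \<lambda>k\<in>I. W k \<omega>))"
      by (simp add: DW)
    also have "\<dots> = M.expectation (\<lambda>\<omega>. Hf (\<lambda>k\<in>I. W k \<omega>))"
      by (rule integral_distr[OF Wm Hfm])
    also have "\<dots> = M.expectation (\<lambda>\<omega>. (test_error f (\<lambda>j. U j \<omega>) (\<lambda>j. V j \<omega>)
                   (ols (design f (\<lambda>i. X i \<omega>) :: real^'p^'n) (\<chi> i. Y i \<omega>)))\<^sup>2)"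
      by (simp add: Hf_def I_def W_def)
    finally show ?thesis by simp
  qed
  have TmR: "T \<in> measurable P0 Rd" using Tm by (simp add: measurable_cong_sets[OF refl sRd])
  have dT: "distr P0 Rd T = Rd" unfolding Rd_def' by (rule distr_cong) (simp_all add: Rd_def'[symmetric] sRd)
  have PiRd: "distr (PiM I (\<lambda>_. P0)) (PiM I (\<lambda>_. Rd)) (compose I T) = PiM I (\<lambda>_. Rd)"
  proof -
    have "distr (PiM I (\<lambda>_. P0)) (PiM I (\<lambda>_. Rd)) (compose I T) = PiM I (\<lambda>_. distr P0 Rd T)"
      by (rule distr_PiM_finite_prob_space') (simp_all add: I_def pP0 pRd TmR)
    then show ?thesis by (simp add: dT)
  qed
  have sPiRd: "sets (PiM I (\<lambda>_. Rd)) = sets (PiM I (\<lambda>_. B2))" by (rule sets_PiM_cong) (simp_all add: sRd)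
  have HfmR: "Hf \<in> borel_measurable (PiM I (\<lambda>_. Rd))" using Hfm by (simp add: measurable_cong_sets[OF sPiRd refl])
  have cTm: "compose I T \<in> measurable (PiM I (\<lambda>_. P0)) (PiM I (\<lambda>_. Rd))"
    unfolding compose_def using TmR by measurable
  have step2: "(\<integral>w. Hf w \<partial>PiM I (\<lambda>_. Rd)) = (\<integral>w. Hf (compose I T w) \<partial>PiM I (\<lambda>_. P0))"
    using integral_distr[OF cTm HfmR] by (simp add: PiRd)
  define PX where "PX = PiM I (\<lambda>_. Px)"
  define PN where "PN = PiM I (\<lambda>_. NN \<sigma>)"
  define \<phi> where "\<phi> = (\<lambda>(x::('n+'m) \<Rightarrow> 'd, e::('n+'m) \<Rightarrow> real). \<lambda>k\<in>I. (x k, e k))"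
  have split: "distr (PX \<Otimes>\<^sub>M PN) (PiM I (\<lambda>_. P0)) \<phi> = PiM I (\<lambda>_. P0)"
    unfolding PX_def PN_def \<phi>_def P0_def by (rule PiM_split) (simp_all add: I_def Px.prob_space_axioms NN.prob_space_axioms)
  have \<phi>m: "\<phi> \<in> measurable (PX \<Otimes>\<^sub>M PN) (PiM I (\<lambda>_. P0))"
    unfolding \<phi>_def PX_def PN_def P0_def by measurable
  have HTm: "(\<lambda>w. Hf (compose I T w)) \<in> borel_measurable (PiM I (\<lambda>_. P0))"
    using HfmR cTm by measurable
  define \<Phi> where "\<Phi> = (\<lambda>z. Hf (compose I T (\<phi> z)))"
  have step3: "(\<integral>w. Hf (compose I T w) \<partial>PiM I (\<lambda>_. P0)) = (\<integral>z. \<Phi> z \<partial>(PX \<Otimes>\<^sub>M PN))"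
    using integral_distr[OF \<phi>m HTm] by (simp add: split \<Phi>_def)
  have \<Phi>m: "\<Phi> \<in> borel_measurable (PX \<Otimes>\<^sub>M PN)"
    unfolding \<Phi>_def using HTm \<phi>m by measurable
  have \<Phi>_eq: "\<Phi> (x, e) = (test_error f (\<lambda>j. x (Inr j)) (\<lambda>j. f (x (Inr j)) \<bullet> \<beta> + e (Inr j))
          (ols (design f (\<lambda>i. x (Inl i)) :: real^'p^'n) (\<chi> i. f (x (Inl i)) \<bullet> \<beta> + e (Inl i))))\<^sup>2" for x e
    by (simp add: \<Phi>_def Hf_def compose_def \<phi>_def T_def I_def)
  define good where "good = (\<lambda>x::('n+'m) \<Rightarrow> 'd. det (gram f (\<lambda>i. x (Inl i)) :: real^'p^'p) \<noteq> 0 \<and>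
      (\<forall>a\<in>UNIV. \<forall>b\<in>UNIV. (1 / real CARD('n)) * gram f (\<lambda>i. x (Inl i)) $ a $ b = (1 / real CARD('m)) * gram f (\<lambda>j. x (Inr j)) $ a $ b))"
  have good_inv: "invertible (transpose (design f (\<lambda>i. x (Inl i)) :: real^'p^'n) ** design f (\<lambda>i. x (Inl i)))" if "good x" for x
    using that unfolding good_def gram_eq by (simp add: invertible_det_nz)
  have good_ms: "(1 / real CARD('n)) *\<^sub>R (transpose (design f (\<lambda>i. x (Inl i))) ** (design f (\<lambda>i. x (Inl i)) :: real^'p^'n))
         = (1 / real CARD('m)) *\<^sub>R (transpose (design f (\<lambda>j. x (Inr j))) ** (design f (\<lambda>j. x (Inr j)) :: real^'p^'m))" if "good x" for x
    using that unfolding good_def gram_eq by (simp add: vec_eq_iff)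
  have sfPN: "sigma_finite_measure PN"
    unfolding PN_def by (rule prob_space_imp_sigma_finite, rule prob_space_PiM) (simp add: NN.prob_space_axioms)
  have pPX: "prob_space PX"
    unfolding PX_def by (rule prob_space_PiM) (simp add: Px.prob_space_axioms)
  have \<Phi>nn: "0 \<le> \<Phi> z" for z unfolding \<Phi>_def Hf_def by simp
  have inner: "(\<integral>\<^sup>+ e. ennreal (\<Phi> (x, e)) \<partial>PN) = ennreal c" if "good x" for x
  proof -
    note ii = inner_integral[OF sp good_inv[OF that] good_ms[OF that], of \<beta>]
    have "(\<integral>\<^sup>+ e. ennreal (\<Phi> (x, e)) \<partial>PN) = ennreal (\<integral>e. \<Phi> (x, e) \<partial>PN)"
      by (rule nn_integral_eq_integral) (use ii(1) in \<open>simp_all add: \<Phi>_eq PN_def I_def \<Phi>nn\<close>)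
    also have "(\<integral>e. \<Phi> (x, e) \<partial>PN) = c"
      using ii(2) by (simp add: \<Phi>_eq PN_def I_def c_def)
    finally show ?thesis .
  qed
  have fstm: "fst \<in> measurable Rd Px"
    by (simp add: measurable_cong_sets[OF sRd sPx] B2_def)
  have fstmB: "fst \<in> measurable B2 Px"
    by (simp add: measurable_cong_sets[OF refl sPx] B2_def)
  have dRdfst: "distr Rd Px fst = Px"
  proof -
    have "distr Rd Px fst = distr P0 Px (fst \<circ> T)"
      unfolding Rd_def' by (rule distr_distr[OF fstmB Tm])
    also have "\<dots> = distr P0 Px fst" by (rule distr_cong) (auto simp: T_def)
    also have "\<dots> = Px" unfolding P0_def by (rule NN.distr_pair_fst)
    finally show ?thesis .
  qed
  define Xv where "Xv = (\<lambda>\<omega>. \<lambda>k\<in>I. fst (W k \<omega>))"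
  have cfm: "compose I fst \<in> measurable (PiM I (\<lambda>_. B2)) PX"
    unfolding compose_def PX_def using fstmB by measurable
  have Xvm: "Xv \<in> measurable M PX"
    unfolding Xv_def PX_def using rv fstmB by measurable
  have dXv: "distr M PX Xv = PX"
  proof -
    have "Xv = compose I fst \<circ> (\<lambda>\<omega>. \<lambda>k\<in>I. W k \<omega>)"
      by (auto simp: Xv_def compose_def fun_eq_iff)
    then have "distr M PX Xv = distr (distr M (PiM I (\<lambda>_. B2)) (\<lambda>\<omega>. \<lambda>k\<in>I. W k \<omega>)) PX (compose I fst)"
      using distr_distr[OF cfm Wm] by simp
    also have "\<dots> = distr (PiM I (\<lambda>_. Rd)) PX (compose I fst)" by (simp add: DW)
    also have "\<dots> = PiM I (\<lambda>_. distr Rd Px fst)"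
      unfolding PX_def by (rule distr_PiM_finite_prob_space') (simp_all add: I_def pRd Px.prob_space_axioms fstm)
    also have "\<dots> = PX" by (simp add: dRdfst PX_def)
    finally show ?thesis .
  qed
  have gramm[measurable]: "(\<lambda>x. gram f (\<lambda>i. x (g i)) $ a $ b) \<in> borel_measurable PX" for g :: "'q::finite \<Rightarrow> 'n + 'm" and a b
  proof -
    have "(\<lambda>x. x (g i)) \<in> measurable PX Px" for i unfolding PX_def I_def by measurable
    then have [measurable]: "(\<lambda>x. x (g i)) \<in> borel_measurable PX" for i
      by (simp add: measurable_cong_sets[OF refl sPx])
    show ?thesis unfolding gram_def vec_lambda_beta by measurable
  qed
  have [measurable]: "(\<lambda>x. det (gram f (\<lambda>i. x (Inl i)) :: real^'p^'p)) \<in> borel_measurable PX"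
  proof -
    have "(\<lambda>x. det (\<chi> a b. gram f (\<lambda>i. x (Inl i)) $ a $ b :: real^'p^'p)) \<in> borel_measurable PX"
      by (rule meas_det) (rule gramm)
    then show ?thesis by simp
  qed
  have [measurable]: "Measurable.pred PX (\<lambda>x. det (gram f (\<lambda>i. x (Inl i)) :: real^'p^'p) = 0)"
    unfolding pred_def by (rule measurable_equality_set) measurable
  have [measurable]: "Measurable.pred PX (\<lambda>x. (1 / real CARD('n)) * gram f (\<lambda>i. x (Inl i)) $ a $ b = (1 / real CARD('m)) * gram f (\<lambda>j. x (Inr j)) $ a $ b)" for a b
    unfolding pred_def by (rule measurable_equality_set) measurable
  have goodS: "{x \<in> space PX. good x} \<in> sets PX"
    unfolding good_def by measurable
  have AEM: "AE \<omega> in M. good (Xv \<omega>)"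
    using rk ms
  proof eventually_elim
    case (elim \<omega>)
    have xi: "(\<lambda>i. Xv \<omega> (Inl i)) = (\<lambda>i. X i \<omega>)" "(\<lambda>j. Xv \<omega> (Inr j)) = (\<lambda>j. U j \<omega>)"
      by (auto simp: Xv_def W_def I_def)
    have "invertible (transpose (design f (\<lambda>i. X i \<omega>)) ** (design f (\<lambda>i. X i \<omega>) :: real^'p^'n))"
      by (rule rank_gram_invertible) (rule elim(1))
    then show ?case using elim(2) unfolding good_def xi gram_eq[symmetric]
      by (simp add: invertible_det_nz vec_eq_iff)
  qed
  have AEgood: "AE x in PX. good x"
  proof -
    have "AE x in distr M PX Xv. good x" using AE_distr_iff[OF Xvm goodS] AEM by simp
    then show ?thesis unfolding dXv .
  qed
  have cnn: "0 \<le> c" unfolding c_def by (intro mult_nonneg_nonneg add_nonneg_nonneg) auto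
  have step4: "(\<integral>z. \<Phi> z \<partial>(PX \<Otimes>\<^sub>M PN)) = c"
  proof -
    have "(\<integral>z. \<Phi> z \<partial>(PX \<Otimes>\<^sub>M PN)) = enn2real (\<integral>\<^sup>+ z. ennreal (\<Phi> z) \<partial>(PX \<Otimes>\<^sub>M PN))"
      by (rule integral_eq_nn_integral[OF \<Phi>m]) (simp add: \<Phi>nn)
    also have "(\<integral>\<^sup>+ z. ennreal (\<Phi> z) \<partial>(PX \<Otimes>\<^sub>M PN)) = (\<integral>\<^sup>+ x. \<integral>\<^sup>+ e. ennreal (\<Phi> (x, e)) \<partial>PN \<partial>PX)"
      by (rule sigma_finite_measure.nn_integral_fst[OF sfPN, symmetric]) (use \<Phi>m in measurable)
    also have "\<dots> = (\<integral>\<^sup>+ x. ennreal c \<partial>PX)"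
      by (rule nn_integral_cong_AE) (use AEgood in \<open>auto simp: inner\<close>)
    also have "\<dots> = ennreal c" using prob_space.emeasure_space_1[OF pPX] by simp
    finally show ?thesis using cnn by simp
  qed
  show ?thesis
    unfolding step1 step2 step3 step4 c_def ..
qed


end
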